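(* Let $(\frac pq,\frac rs)$ be a Farey pair of order $n$ with $q\ge 2$. Put $d=\lfloor n/q\rfloor$, $\delta=\gcd(d,s)$, $d=d_1\delta$, $s=s_1\delta$. Let $\alpha\in[0,1]$, $\beta=1-\alpha$, $j\in\{0,\dots,\delta-1\}$, and $$g_{\alpha,j}(t)=(t^q-\beta)^{d_1}-\alpha^{d_1}t^{qd_1-s_1}e^{2\pi i j/\delta},\qquad \hat g_{\alpha,j}(t)=t^{qd_1}-\beta-\alpha t^{qd_1-s_1}e^{2\pi i j/(\delta d_1)}.$$ If $\hat t_1,\dots,\hat t_N$ are the nonzero roots of $\hat g_{\alpha,j}$ listed with multiplicity, then $\hat t_1^{d_1},\dots,\hat t_N^{d_1}$ are the nonzero roots of $g_{\alpha,j}$ listed with multiplicity.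
   Context: $\mathcal{F}_n=\{p/q:0\le p<q\le n,\ \gcd(p,q)=1\}$; a Farey pair of order $n$ is a pair $(\frac pq,\frac rs)$ of elements of $\mathcal F_n$ with $\frac pq<\frac rs$ and no element of $\mathcal F_n$ strictly between them. $g_{\alpha,j}$ and $\hat g_{\alpha,j}$ are regarded as rational functions of $t$ (the exponent $qd_1-s_1$ may be negative). *)

theory Defs
  imports "HOL-Analysis.Analysis" "HOL-Computational_Algebra.Fundamental_Theorem_Algebra"
begin

definition farey :: "nat \<Rightarrow> rat set" where
  "farey n = {of_nat p / of_nat q | p q. p < q \<and> q \<le> n \<and> coprime p q}"

definition farey_pair :: "nat \<Rightarrow> nat \<Rightarrow> nat \<Rightarrow> nat \<Rightarrow> nat \<Rightarrow> bool" where
  "farey_pair n p q r s \<longleftrightarrow>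
     p < q \<and> q \<le> n \<and> coprime p q \<and> r < s \<and> s \<le> n \<and> coprime r s \<and>
     of_nat p / of_nat q < (of_nat r / of_nat s :: rat) \<and>
     \<not> (\<exists>x\<in>farey n. of_nat p / of_nat q < x \<and> x < of_nat r / of_nat s)"

definition nz_roots :: "complex poly \<Rightarrow> complex multiset" where
  "nz_roots P = filter_mset (\<lambda>z. z \<noteq> 0) (proots P)"

text \<open>Laurent polynomials: t^k * P(t) with k an integer, P a polynomial.
  Its nonzero roots (with multiplicity) are those of P, since t^k is a unit
  away from 0.  We represent g and g-hat as sums of a polynomial and a single
  monomial c t^e with e :: int possibly negative, and clear denominators by
  multiplying with t^m for any m with e + m >= 0.\<close>
definition laurent_poly :: "complex poly \<Rightarrow> complex \<Rightarrow> int \<Rightarrow> complex poly" where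
  "laurent_poly A c e =
     (let m = nat (- e) in monom 1 m * A + monom c (nat (e + int m)))"

definition g_poly :: "nat \<Rightarrow> nat \<Rightarrow> nat \<Rightarrow> real \<Rightarrow> nat \<Rightarrow> nat \<Rightarrow> complex poly" where
  "g_poly q d1 s1 \<alpha> \<delta> j =
     laurent_poly (([: - complex_of_real (1 - \<alpha>) :] + monom 1 q) ^ d1)
       (- (complex_of_real \<alpha> ^ d1 * exp (2 * pi * \<i> * of_nat j / of_nat \<delta>)))
       (int (q * d1) - int s1)"

definition ghat_poly :: "nat \<Rightarrow> nat \<Rightarrow> nat \<Rightarrow> real \<Rightarrow> nat \<Rightarrow> nat \<Rightarrow> complex poly" where
  "ghat_poly q d1 s1 \<alpha> \<delta> j =
     laurent_poly (monom 1 (q * d1) - [: complex_of_real (1 - \<alpha>) :])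
       (- (complex_of_real \<alpha> * exp (2 * pi * \<i> * of_nat j / (of_nat \<delta> * of_nat d1))))
       (int (q * d1) - int s1)"

end

theory Submission
  imports Defs "HOL-Number_Theory.Cong"
begin


lemma R0:
  fixes \<xi> :: complex
  assumes d: "d > 0" and u: "\<xi> ^ d = 1" and inj: "inj_on (\<lambda>k. \<xi> ^ k) {..<d}"
  shows "(\<Prod>k<d. [:- (\<xi> ^ k), 1:]) = monom 1 d - 1"
proof (rule poly_eqI_degree_lead_coeff[where n = d and A = "(\<lambda>k. \<xi> ^ k) ` {..<d}"])
  have dP: "degree (\<Prod>k<d. [:- (\<xi> ^ k), 1:]) = d"
    by (subst degree_prod_sum_eq) auto
  show "coeff (\<Prod>k<d. [:- (\<xi> ^ k), 1:]) d = coeff (monom 1 d - 1) d"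
    using d dP lead_coeff_prod[of "\<lambda>k. [:- (\<xi> ^ k), 1:]" "{..<d}"] by simp
  show "d \<le> card ((\<lambda>k. \<xi> ^ k) ` {..<d})" using card_image[OF inj] by simp
  show "degree (\<Prod>k<d. [:- (\<xi> ^ k), 1:]) \<le> d" using dP by simp
  show "degree (monom 1 d - 1 :: complex poly) \<le> d"
    by (intro degree_diff_le) (auto simp: degree_monom_le)
  fix z assume "z \<in> (\<lambda>k. \<xi> ^ k) ` {..<d}"
  then obtain k where k: "k < d" "z = \<xi> ^ k" by auto
  have "z ^ d = 1" using u k by (metis power_mult mult.commute power_one)
  moreover have "poly (\<Prod>k<d. [:- (\<xi> ^ k), 1:]) z = 0"
    using k by (auto simp: poly_prod)
  ultimately show "poly (\<Prod>k<d. [:- (\<xi> ^ k), 1:]) z = poly (monom 1 d - 1) z"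
    by (simp add: poly_monom)
qed

lemma R1:
  fixes \<xi> x y :: complex
  assumes d: "d > 0" and u: "\<xi> ^ d = 1" and inj: "inj_on (\<lambda>k. \<xi> ^ k) {..<d}"
  shows "(\<Prod>k<d. (x - \<xi> ^ k * y)) = x ^ d - y ^ d"
proof (cases "y = 0")
  case True then show ?thesis using d by simp
next
  case False
  have "(\<Prod>k<d. (x - \<xi> ^ k * y)) = (\<Prod>k<d. y * (x / y - \<xi> ^ k))"
    using False by (intro prod.cong) (auto simp: field_simps)
  also have "\<dots> = y ^ d * (\<Prod>k<d. (x / y - \<xi> ^ k))"
    by (simp add: prod.distrib)
  also have "(\<Prod>k<d. (x / y - \<xi> ^ k)) = poly (\<Prod>k<d. [:- (\<xi> ^ k), 1:]) (x / y)"
    by (simp add: poly_prod)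
  also have "\<dots> = (x / y) ^ d - 1" by (simp add: R0[OF assms] poly_monom)
  also have "y ^ d * ((x / y) ^ d - 1) = x ^ d - y ^ d"
    using False by (simp add: power_divide right_diff_distrib)
  finally show ?thesis .
qed

lemma nz_roots_mult: "p \<noteq> 0 \<Longrightarrow> q \<noteq> 0 \<Longrightarrow> nz_roots (p * q) = nz_roots p + nz_roots q"
  by (simp add: nz_roots_def proots_mult)

lemma nz_roots_smult: "c \<noteq> 0 \<Longrightarrow> nz_roots (smult c p) = nz_roots p"
  by (simp add: nz_roots_def)

lemma prod_lin_nz: "(\<Prod>z\<in>#M. [:-z, 1::complex:]) \<noteq> 0"
proof -
  have "[:-z, 1::complex:] \<noteq> 0" for z by simp
  then show ?thesis by (simp add: prod_mset_zero_iff image_iff)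
qed

lemma single_A:
  fixes z :: complex assumes d: "d > 0"
  shows "image_mset (\<lambda>w. w ^ d) (nz_roots (pcompose [:-z, 1:] (monom 1 d))) = repeat_mset d (nz_roots [:-z, 1:])"
proof -
  define Q where "Q = pcompose [:-z, 1:] (monom (1::complex) d)"
  have pQ: "poly Q w = w ^ d - z" for w by (simp add: Q_def poly_pcompose poly_monom)
  have Q0: "Q \<noteq> 0" unfolding Q_def using d by (subst pcompose_eq_0_iff) (auto simp: degree_monom_eq)
  have degQ: "degree Q = d" unfolding Q_def using d by (simp add: degree_pcompose degree_monom_eq)
  have nzl: "nz_roots [:-z, 1:] = (if z = 0 then {#} else {#z#})"
    using proots_linear_factor[of "-z"] by (simp add: nz_roots_def)
  show ?thesis
  proof (cases "z = 0")
    case True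
    have "\<forall>w \<in># proots Q. w = 0" using Q0 pQ True by auto
    then have "nz_roots Q = {#}" unfolding nz_roots_def by (simp add: filter_mset_eq_conv)
    then show ?thesis using True nzl Q_def by simp
  next
    case False
    have r: "\<forall>w \<in># proots Q. w ^ d = z" using Q0 pQ by auto
    then have "nz_roots Q = proots Q" unfolding nz_roots_def using False
      by (intro filter_mset_eq_conv[THEN iffD2]) (auto simp: zero_power[OF d])
    have "image_mset (\<lambda>w. w ^ d) (nz_roots Q) = image_mset (\<lambda>_. z) (proots Q)"
      unfolding \<open>nz_roots Q = proots Q\<close> by (rule image_mset_cong) (use r in auto)
    also have "\<dots> = replicate_mset d z" using image_mset_const_eq[of z "proots Q"]
      by (simp add: size_proots_complex degQ)
    finally show ?thesis using False nzl Q_def by simp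
  qed
qed

lemma lemA:
  fixes p :: "complex poly" assumes d: "d > 0" and p: "p \<noteq> 0"
  shows "image_mset (\<lambda>w. w ^ d) (nz_roots (pcompose p (monom 1 d))) = repeat_mset d (nz_roots p)"
proof -
  have dm: "degree (monom (1::complex) d) > 0" using d by (simp add: degree_monom_eq)
  have key: "image_mset (\<lambda>w. w ^ d) (nz_roots (pcompose (smult c (\<Prod>z\<in>#M. [:-z,1:])) (monom 1 d)))
     = repeat_mset d (nz_roots (smult c (\<Prod>z\<in>#M. [:-z,1:])))" if c: "c \<noteq> 0" for c M
  proof (induction M)
    case empty
    then show ?case by (simp add: pcompose_smult nz_roots_def)
  next
    case (add z M)
    have e1: "smult c (\<Prod>z\<in>#add_mset z M. [:-z,1:]) = [:-z,1:] * smult c (\<Prod>z\<in>#M. [:-z,1:])"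
      by simp
    have n1: "smult c (\<Prod>z\<in>#M. [:-z,1:]) \<noteq> 0" using c prod_lin_nz by simp
    have n2: "[:-z,1::complex:] \<noteq> 0" by simp
    have n1': "pcompose (smult c (\<Prod>z\<in>#M. [:-z,1:])) (monom 1 d) \<noteq> 0"
      using n1 pcompose_eq_0_iff[OF dm] by blast
    have n2': "pcompose [:-z,1::complex:] (monom 1 d) \<noteq> 0"
      using n2 pcompose_eq_0_iff[OF dm] by blast
    have m1: "nz_roots (pcompose [:-z,1:] (monom 1 d) * pcompose (smult c (\<Prod>z\<in>#M. [:-z,1:])) (monom 1 d))
       = nz_roots (pcompose [:-z,1:] (monom 1 d)) + nz_roots (pcompose (smult c (\<Prod>z\<in>#M. [:-z,1:])) (monom 1 d))"
      by (rule nz_roots_mult[OF n2' n1'])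
    have m2: "nz_roots ([:-z,1:] * smult c (\<Prod>z\<in>#M. [:-z,1:]))
       = nz_roots [:-z,1:] + nz_roots (smult c (\<Prod>z\<in>#M. [:-z,1:]))"
      by (rule nz_roots_mult[OF n2 n1])
    show ?case unfolding e1 pcompose_mult m1 m2 image_mset_union
      using add.IH single_A[OF d, of z] by (simp only: repeat_mset_distrib2)
  qed
  have "lead_coeff p \<noteq> 0" using p by simp
  from key[OF this, of "proots p"] show ?thesis
    by (simp only: complex_poly_decompose_multiset)
qed

lemma single_B:
  fixes z l :: complex assumes l: "l \<noteq> 0" "l ^ d = 1"
  shows "image_mset (\<lambda>w. w ^ d) (nz_roots (pcompose [:-z, 1:] [:0, l:])) = image_mset (\<lambda>w. w ^ d) (nz_roots [:-z, 1:])"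
proof -
  have e: "pcompose [:-z, 1:] [:0, l:] = smult l [:-(z/l), 1:]" using l by (simp add: pcompose_pCons)
  then have "nz_roots (pcompose [:-z, 1:] [:0, l:]) = nz_roots [:-(z/l), 1:]"
    by (subst e) (rule nz_roots_smult[OF l(1)])
  also have "\<dots> = (if z = 0 then {#} else {#z/l#})"
    using proots_linear_factor[of "-(z/l)"] l by (simp add: nz_roots_def)
  finally show ?thesis
    using proots_linear_factor[of "-z"] l by (simp add: nz_roots_def power_divide)
qed

lemma lemB:
  fixes p :: "complex poly" and l :: complex assumes l: "l \<noteq> 0" "l ^ d = 1" and p: "p \<noteq> 0"
  shows "image_mset (\<lambda>w. w ^ d) (nz_roots (pcompose p [:0, l:])) = image_mset (\<lambda>w. w ^ d) (nz_roots p)"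
proof -
  have dm: "degree [:0, l:] > 0" using l by simp
  have key: "image_mset (\<lambda>w. w ^ d) (nz_roots (pcompose (smult c (\<Prod>z\<in>#M. [:-z,1:])) [:0, l:]))
     = image_mset (\<lambda>w. w ^ d) (nz_roots (smult c (\<Prod>z\<in>#M. [:-z,1:])))" if c: "c \<noteq> 0" for c M
  proof (induction M)
    case empty
    then show ?case by (simp add: pcompose_smult nz_roots_def)
  next
    case (add z M)
    have e1: "smult c (\<Prod>z\<in>#add_mset z M. [:-z,1:]) = [:-z,1:] * smult c (\<Prod>z\<in>#M. [:-z,1:])"
      by simp
    have n1: "smult c (\<Prod>z\<in>#M. [:-z,1:]) \<noteq> 0" using c prod_lin_nz by simp
    have n2: "[:-z,1::complex:] \<noteq> 0" by simp
    have n1': "pcompose (smult c (\<Prod>z\<in>#M. [:-z,1:])) [:0, l:] \<noteq> 0"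
      using n1 pcompose_eq_0_iff[OF dm] by blast
    have n2': "pcompose [:-z,1::complex:] [:0, l:] \<noteq> 0"
      using n2 pcompose_eq_0_iff[OF dm] by blast
    have m1: "nz_roots (pcompose [:-z,1:] [:0, l:] * pcompose (smult c (\<Prod>z\<in>#M. [:-z,1:])) [:0, l:])
       = nz_roots (pcompose [:-z,1:] [:0, l:]) + nz_roots (pcompose (smult c (\<Prod>z\<in>#M. [:-z,1:])) [:0, l:])"
      by (rule nz_roots_mult[OF n2' n1'])
    have m2: "nz_roots ([:-z,1:] * smult c (\<Prod>z\<in>#M. [:-z,1:]))
       = nz_roots [:-z,1:] + nz_roots (smult c (\<Prod>z\<in>#M. [:-z,1:]))"
      by (rule nz_roots_mult[OF n2 n1])
    show ?case unfolding e1 pcompose_mult m1 m2 image_mset_union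
      using add.IH single_B[OF l, of z] by (simp only: repeat_mset_distrib2)
  qed
  have "lead_coeff p \<noteq> 0" using p by simp
  from key[OF this, of "proots p"] show ?thesis
    by (simp only: complex_poly_decompose_multiset)
qed

lemma img_nz_prod:
  fixes f :: "nat \<Rightarrow> complex poly"
  assumes "\<And>k. k \<in> A \<Longrightarrow> f k \<noteq> 0"
  shows "image_mset (\<lambda>w. w ^ d) (nz_roots (\<Prod>k\<in>A. f k)) = (\<Sum>k\<in>A. image_mset (\<lambda>w. w ^ d) (nz_roots (f k)))"
  using assms
proof (induction A rule: infinite_finite_induct)
  case (infinite A) then show ?case by (simp add: nz_roots_def)
next
  case empty then show ?case by (simp add: nz_roots_def)
next
  case (insert x F)
  have "(\<Prod>k\<in>F. f k) \<noteq> 0" using insert by auto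
  then show ?case using insert by (simp add: nz_roots_mult)
qed

lemma poly_laurent: "poly (laurent_poly A c e) x = x ^ nat (- e) * poly A x + c * x ^ nat (e + int (nat (- e)))"
  by (simp add: laurent_poly_def Let_def poly_monom)



theorem lemma4p4:
  fixes n p q r s d \<delta> d1 s1 j :: nat and \<alpha> :: real
  assumes "farey_pair n p q r s"
    and "q \<ge> 2"
    and "d = n div q"
    and "\<delta> = gcd d s"
    and "d = d1 * \<delta>"
    and "s = s1 * \<delta>"
    and "0 \<le> \<alpha>" and "\<alpha> \<le> 1"
    and "j < \<delta>"
  shows "image_mset (\<lambda>w. w ^ d1) (nz_roots (ghat_poly q d1 s1 \<alpha> \<delta> j))
           = nz_roots (g_poly q d1 s1 \<alpha> \<delta> j)"
proof -
  have qn: "q \<le> n" and sp: "s > 0" using assms(1) unfolding farey_pair_def by auto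
  have dpos: "d > 0" using qn assms(2,3) by (simp add: div_greater_zero_iff)
  have dl: "\<delta> > 0" using sp assms(4) by simp
  have d1: "d1 > 0" using dpos assms(5) by simp
  have s1: "s1 > 0" using sp assms(6) by simp
  have "\<delta> * gcd d1 s1 = \<delta>"
    using assms(4,5,6) by (metis gcd_mult_distrib_nat mult.commute)
  then have cop: "coprime s1 d1" using dl by (simp add: coprime_iff_gcd_eq_1 gcd.commute)
  define N where "N = q * d1"
  have Npos: "N > 0" using d1 assms(2) by (simp add: N_def)
  define e :: int where "e = int N - int s1"
  define m where "m = nat (- e)"
  define E where "E = nat (e + int m)"
  have EN: "E + s1 = N + m" unfolding E_def m_def e_def by linarith
  define \<beta> where "\<beta> = complex_of_real (1 - \<alpha>)"
  define a where "a = complex_of_real \<alpha>"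
  define \<zeta> where "\<zeta> = exp (2 * pi * \<i> * of_nat j / (of_nat \<delta> * of_nat d1))"
  define c1 where "c1 = - (a * \<zeta>)"
  define c2 where "c2 = - (a ^ d1 * exp (2 * pi * \<i> * of_nat j / of_nat \<delta>))"
  define Gh where "Gh = ghat_poly q d1 s1 \<alpha> \<delta> j"
  define G where "G = g_poly q d1 s1 \<alpha> \<delta> j"
  have pGh: "poly Gh x = x ^ m * (x ^ N - \<beta>) + c1 * x ^ E" for x
    unfolding Gh_def ghat_poly_def poly_laurent
    by (simp add: m_def E_def e_def N_def \<beta>_def c1_def a_def \<zeta>_def poly_monom)
  have pG: "poly G x = x ^ m * (x ^ q - \<beta>) ^ d1 + c2 * x ^ E" for x
    unfolding G_def g_poly_def poly_laurent
    by (simp add: m_def E_def e_def N_def \<beta>_def c2_def a_def poly_monom) (simp add: algebra_simps)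
  have zeta_pow: "\<zeta> ^ d1 = exp (2 * pi * \<i> * of_nat j / of_nat \<delta>)"
  proof -
    have "\<zeta> ^ d1 = exp (of_nat d1 * (2 * pi * \<i> * of_nat j / (of_nat \<delta> * of_nat d1)))"
      unfolding \<zeta>_def by (rule exp_of_nat_mult[symmetric])
    also have "of_nat d1 * (2 * pi * \<i> * of_nat j / (of_nat \<delta> * of_nat d1)) = 2 * pi * \<i> * of_nat j / (of_nat \<delta> :: complex)"
      using d1 by (simp add: field_simps)
    finally show ?thesis .
  qed
  define W :: "nat \<Rightarrow> complex" where "W k = exp (2 * of_real pi * \<i> * of_nat k / of_nat d1)" for k
  define \<omega> where "\<omega> = W 1"
  have Wk: "\<omega> ^ k = W k" for k
  proof -
    have "\<omega> ^ k = exp (of_nat k * (2 * of_real pi * \<i> * of_nat 1 / of_nat d1))"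
      unfolding \<omega>_def W_def by (rule exp_of_nat_mult[symmetric])
    also have "of_nat k * (2 * of_real pi * \<i> * of_nat 1 / of_nat d1) = 2 * of_real pi * \<i> * of_nat k / (of_nat d1 :: complex)"
      by simp
    finally show ?thesis unfolding W_def .
  qed
  have om0: "\<omega> \<noteq> 0" unfolding \<omega>_def W_def by simp
  have omd: "\<omega> ^ d1 = 1" unfolding Wk W_def using complex_root_unity_eq_1[of d1 d1] d1 by simp
  define \<xi> where "\<xi> = (inverse \<omega>) ^ s1"
  have xik: "\<xi> ^ k = inverse (\<omega> ^ (s1 * k))" for k
    unfolding \<xi>_def by (simp add: power_mult power_inverse)
  have xid: "\<xi> ^ d1 = 1" unfolding xik by (simp add: mult.commute[of s1] power_mult omd)
  have xinj: "inj_on (\<lambda>k. \<xi> ^ k) {..<d1}"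
  proof (rule inj_onI)
    fix x y assume xy: "x \<in> {..<d1}" "y \<in> {..<d1}" "\<xi> ^ x = \<xi> ^ y"
    then have "W (s1 * x) = W (s1 * y)" unfolding xik Wk[symmetric] by simp
    then have "(s1 * x) mod d1 = (s1 * y) mod d1"
      unfolding W_def using complex_root_unity_eq[of d1 "s1 * x" "s1 * y"] d1 by simp
    then have "[s1 * x = s1 * y] (mod d1)" by (simp add: cong_def)
    then have "[x = y] (mod d1)" using cong_mult_lcancel_nat[OF cop] by simp
    then show "x = y" using xy cong_less_modulus_unique_nat by auto
  qed
  have lamN: "(\<omega> ^ k) ^ N = 1" for k
    unfolding N_def by (metis mult.commute power_mult omd power_one)
  have lamE: "(\<omega> ^ k) ^ E = (\<omega> ^ k) ^ m * \<xi> ^ k" for k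
  proof -
    have "(\<omega> ^ k) ^ E * (\<omega> ^ k) ^ s1 = (\<omega> ^ k) ^ m"
      using lamN[of k] by (simp add: power_add[symmetric] EN) (simp add: power_add)
    moreover have "(\<omega> ^ k) ^ s1 * \<xi> ^ k = 1"
      unfolding xik using om0 by (simp add: power_mult[symmetric] mult.commute)
    ultimately show ?thesis by (metis mult.assoc mult_1_right)
  qed
  define X where "X t = t ^ m * (t ^ N - \<beta>)" for t
  define Y where "Y t = a * \<zeta> * t ^ E" for t
  have fac: "poly Gh (\<omega> ^ k * t) = (\<omega> ^ k) ^ m * (X t - \<xi> ^ k * Y t)" for k t
    unfolding pGh X_def Y_def c1_def power_mult_distrib lamN lamE
    by (simp add: algebra_simps)
  define K where "K = (\<Prod>k<d1. (\<omega> ^ k) ^ m)"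
  have K0: "K \<noteq> 0" unfolding K_def using om0 by simp
  have prodfac: "(\<Prod>k<d1. poly Gh (\<omega> ^ k * t)) = K * (X t ^ d1 - Y t ^ d1)" for t
    unfolding fac K_def prod.distrib R1[OF d1 xid xinj] by simp
  have Gcomp: "poly G (t ^ d1) = X t ^ d1 - Y t ^ d1" for t
    unfolding pG X_def Y_def c2_def power_mult_distrib zeta_pow[symmetric]
    by (simp add: power_mult[symmetric] N_def mult.commute algebra_simps)
  define H where "H k = pcompose Gh [:0, \<omega> ^ k:]" for k
  have ident: "pcompose G (monom 1 d1) = smult (inverse K) (\<Prod>k<d1. H k)"
  proof (rule poly_eq_poly_eq_iff[THEN iffD1], rule ext)
    fix t
    show "poly (pcompose G (monom 1 d1)) t = poly (smult (inverse K) (\<Prod>k<d1. H k)) t"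
      unfolding H_def poly_smult poly_prod poly_pcompose
      using prodfac[of t] Gcomp[of t] K0 by (simp add: poly_monom mult.commute)
  qed
  have Gh_eq: "Gh = monom 1 m * (monom 1 N - [:\<beta>:]) + monom c1 E"
    unfolding Gh_def ghat_poly_def laurent_poly_def Let_def
    by (simp add: m_def E_def e_def N_def \<beta>_def c1_def a_def \<zeta>_def)
  have cb: "coeff [:\<beta>:] N = 0" using Npos by (cases N) auto
  have "coeff Gh (m + N) = 1"
    unfolding Gh_eq using Npos EN s1 cb by (simp add: coeff_monom_mult coeff_monom)
  then have Gh0: "Gh \<noteq> 0" by auto
  have H0: "H k \<noteq> 0" for k
    unfolding H_def using Gh0 pcompose_eq_0_iff[of "[:0, \<omega> ^ k:]" Gh] om0 by simp
  have P0: "(\<Prod>k<d1. H k) \<noteq> 0" using H0 by simp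
  have G0: "G \<noteq> 0"
  proof
    assume "G = 0"
    then have "smult (inverse K) (\<Prod>k<d1. H k) = 0" using ident by simp
    then show False using K0 P0 by simp
  qed
  have iK: "inverse K \<noteq> 0" using K0 by simp
  have lhs: "image_mset (\<lambda>w. w ^ d1) (nz_roots (pcompose G (monom 1 d1))) = repeat_mset d1 (nz_roots G)"
    by (rule lemA[OF d1 G0])
  have "image_mset (\<lambda>w. w ^ d1) (nz_roots (pcompose G (monom 1 d1)))
     = (\<Sum>k<d1. image_mset (\<lambda>w. w ^ d1) (nz_roots (H k)))"
    unfolding ident nz_roots_smult[OF iK]
    by (rule img_nz_prod) (use H0 in auto)
  also have "\<dots> = (\<Sum>k<d1. image_mset (\<lambda>w. w ^ d1) (nz_roots Gh))"
  proof (rule sum.cong[OF refl])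
    fix k
    have "(\<omega> ^ k) ^ d1 = 1" by (metis mult.commute power_mult omd power_one)
    then show "image_mset (\<lambda>w. w ^ d1) (nz_roots (H k)) = image_mset (\<lambda>w. w ^ d1) (nz_roots Gh)"
      unfolding H_def using om0 Gh0 by (intro lemB) auto
  qed
  finally have eq: "repeat_mset d1 (nz_roots G) = (\<Sum>k<d1. image_mset (\<lambda>w. w ^ d1) (nz_roots Gh))"
    using lhs by simp
  show ?thesis
  proof (rule multiset_eqI)
    fix u
    have "d1 * count (nz_roots G) u = d1 * count (image_mset (\<lambda>w. w ^ d1) (nz_roots Gh)) u"
      using arg_cong[OF eq, of "\<lambda>M. count M u"] by (simp add: count_sum)
    then show "count (image_mset (\<lambda>w. w ^ d1) (nz_roots (ghat_poly q d1 s1 \<alpha> \<delta> j))) u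
        = count (nz_roots (g_poly q d1 s1 \<alpha> \<delta> j)) u"
      using d1 unfolding Gh_def G_def by simp
  qed
qed

end
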